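(* Let $a\in\mathbb{F}$ be such that $\mathbb{F}$ has finite dimension as a right vector space over $K^{\sigma,\delta}_a$. Then for every $r\in\mathbb{Z}_+$ there exists a $(\sigma,\delta)$-multiplicity sequence $\mathbf a=(a_1,\dots,a_r)\in\mathbb{F}^r$ with $a_1=a$.
   Context: Let $\mathbb{F}$ be a division ring, $\sigma$ a ring endomorphism and $\delta$ a $\sigma$-derivation; $\mathbb{F}[x;\sigma,\delta]$ is the skew polynomial ring with $xa=\sigma(a)x+\delta(a)$. $K^{\sigma,\delta}_a=\{\beta\in\mathbb{F}:\sigma(\beta)a+\delta(\beta)=a\beta\}$ is the $(\sigma,\delta)$-centralizer of $a$, a division subring. For $\mathbf a=(a_1,\dots,a_r)$, $P_{\mathbf a}=(x-a_r)\cdots(x-a_1)$; $\mathbf a$ is a $(\sigma,\delta)$-multiplicity sequence if $a_1$ is the only $b\in\mathbb{F}$ such that $x-b$ divides $P_{\mathbf a}$ on the right. *)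

theory Defs
  imports "HOL-Computational_Algebra.Polynomial"
begin

(* Skew polynomials F[x; sigma, delta] are represented by their (left) coefficient
   sequences, stored in the library type 'a poly (used only as a container of
   finitely supported coefficients; the library multiplication is NOT used).
   p = sum_n (coeff p n) x^n. *)

definition ring_endo :: "('a::division_ring \<Rightarrow> 'a) \<Rightarrow> bool" where
  "ring_endo \<sigma> \<longleftrightarrow> (\<forall>a b. \<sigma> (a + b) = \<sigma> a + \<sigma> b) \<and>
                    (\<forall>a b. \<sigma> (a * b) = \<sigma> a * \<sigma> b) \<and> \<sigma> 1 = 1"

definition sigma_derivation :: "('a::division_ring \<Rightarrow> 'a) \<Rightarrow> ('a \<Rightarrow> 'a) \<Rightarrow> bool" where
  "sigma_derivation \<sigma> \<delta> \<longleftrightarrow> (\<forall>a b. \<delta> (a + b) = \<delta> a + \<delta> b) \<and>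
                             (\<forall>a b. \<delta> (a * b) = \<sigma> a * \<delta> b + \<delta> a * b)"

(* left multiplication by x:  x * (c x^i) = sigma(c) x^(i+1) + delta(c) x^i *)
definition skew_xmult :: "('a::division_ring \<Rightarrow> 'a) \<Rightarrow> ('a \<Rightarrow> 'a) \<Rightarrow> 'a poly \<Rightarrow> 'a poly" where
  "skew_xmult \<sigma> \<delta> q = Poly (map (\<lambda>i. (if i = 0 then 0 else \<sigma> (coeff q (i - 1))) + \<delta> (coeff q i))
                                [0..<Suc (Suc (degree q))])"

definition skew_mult :: "('a::division_ring \<Rightarrow> 'a) \<Rightarrow> ('a \<Rightarrow> 'a) \<Rightarrow> 'a poly \<Rightarrow> 'a poly \<Rightarrow> 'a poly" where
  "skew_mult \<sigma> \<delta> p q = Poly (map (\<lambda>i. \<Sum>n\<le>degree p. coeff p n * coeff ((skew_xmult \<sigma> \<delta> ^^ n) q) i)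
                                [0..<Suc (degree p + degree q)])"

definition skew_lin :: "'a::division_ring \<Rightarrow> 'a poly" where
  "skew_lin b = [: - b, 1 :]"

(* P_a = (x - a_r) ... (x - a_1) for the list [a_1, ..., a_r] *)
definition P_seq :: "('a::division_ring \<Rightarrow> 'a) \<Rightarrow> ('a \<Rightarrow> 'a) \<Rightarrow> 'a list \<Rightarrow> 'a poly" where
  "P_seq \<sigma> \<delta> as = foldl (\<lambda>acc b. skew_mult \<sigma> \<delta> (skew_lin b) acc) [: 1 :] as"

definition right_dvd :: "('a::division_ring \<Rightarrow> 'a) \<Rightarrow> ('a \<Rightarrow> 'a) \<Rightarrow> 'a poly \<Rightarrow> 'a poly \<Rightarrow> bool" where
  "right_dvd \<sigma> \<delta> f g \<longleftrightarrow> (\<exists>Q. g = skew_mult \<sigma> \<delta> Q f)"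

definition multiplicity_seq :: "('a::division_ring \<Rightarrow> 'a) \<Rightarrow> ('a \<Rightarrow> 'a) \<Rightarrow> 'a list \<Rightarrow> bool" where
  "multiplicity_seq \<sigma> \<delta> as \<longleftrightarrow> as \<noteq> [] \<and>
     (\<forall>b. right_dvd \<sigma> \<delta> (skew_lin b) (P_seq \<sigma> \<delta> as) \<longleftrightarrow> b = hd as)"

definition centralizer :: "('a::division_ring \<Rightarrow> 'a) \<Rightarrow> ('a \<Rightarrow> 'a) \<Rightarrow> 'a \<Rightarrow> 'a set" where
  "centralizer \<sigma> \<delta> a = {\<beta>. \<sigma> \<beta> * a + \<delta> \<beta> = a * \<beta>}"

definition right_fin_dim :: "'a::division_ring set \<Rightarrow> bool" where
  "right_fin_dim K \<longleftrightarrow> (\<exists>B. finite B \<and>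
     (\<forall>y. \<exists>c. (\<forall>v\<in>B. c v \<in> K) \<and> y = (\<Sum>v\<in>B. v * c v)))"

end

theory Submission
  imports Defs
begin

locale skew =
  fixes \<sigma> \<delta> :: "'a::division_ring \<Rightarrow> 'a"
  assumes endo: "ring_endo \<sigma>" and der: "sigma_derivation \<sigma> \<delta>"
begin

lemma s_add: "\<sigma> (x+y) = \<sigma> x + \<sigma> y" using endo unfolding ring_endo_def by blast
lemma s_mult: "\<sigma> (x*y) = \<sigma> x * \<sigma> y" using endo unfolding ring_endo_def by blast
lemma s_1: "\<sigma> 1 = 1" using endo unfolding ring_endo_def by blast
lemma s_0: "\<sigma> 0 = 0" using s_add[of 0 0] by simp
lemma s_neg: "\<sigma> (-x) = - \<sigma> x" using s_add[of x "-x"] s_0 minus_unique[of "\<sigma> x" "\<sigma> (-x)"] by simp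
lemma s_nz: "x \<noteq> 0 \<Longrightarrow> \<sigma> x \<noteq> 0" using s_mult[of x "inverse x"] s_1 by auto
lemma d_add: "\<delta> (x+y) = \<delta> x + \<delta> y" using der unfolding sigma_derivation_def by blast
lemma d_mult: "\<delta> (x*y) = \<sigma> x * \<delta> y + \<delta> x * y" using der unfolding sigma_derivation_def by blast
lemma d_0: "\<delta> 0 = 0" using d_add[of 0 0] by simp
lemma d_neg: "\<delta> (-x) = - \<delta> x" using d_add[of x "-x"] d_0 minus_unique[of "\<delta> x" "\<delta> (-x)"] by simp
lemma d_1: "\<delta> 1 = 0" using d_mult[of 1 1] s_1 by simp

definition T :: "'a \<Rightarrow> 'a \<Rightarrow> 'a" where "T b c = \<sigma> c * b + \<delta> c"

lemma T_add: "T b (x+y) = T b x + T b y" unfolding T_def s_add d_add by (simp add: algebra_simps)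
lemma T_0: "T b 0 = 0" unfolding T_def s_0 d_0 by simp
lemma T_neg: "T b (-x) = - T b x" unfolding T_def s_neg d_neg by simp
lemma T_diff: "T b (x-y) = T b x - T b y" using T_add[of b x "-y"] T_neg by simp
lemma T_1: "T b 1 = b" unfolding T_def s_1 d_1 by simp
lemma T_mult: "T b (x*y) = \<sigma> x * T b y + \<delta> x * y" unfolding T_def s_mult d_mult by (simp add: algebra_simps)
lemma T_sum: "T b (sum f A) = (\<Sum>i\<in>A. T b (f i))"
  using sum_comp_morphism[of "T b" f A, OF T_0 T_add] by (simp add: o_def)
lemma Tpow_0: "(T b ^^ n) 0 = 0" by (induction n) (auto simp: T_0)

abbreviation X where "X n q \<equiv> (skew_xmult \<sigma> \<delta> ^^ n) q"

lemma coeff_xmult: "coeff (skew_xmult \<sigma> \<delta> q) i = (if i = 0 then 0 else \<sigma> (coeff q (i - 1))) + \<delta> (coeff q i)"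
proof (cases "i < Suc (Suc (degree q))")
  case True then show ?thesis unfolding skew_xmult_def by (simp add: nth_default_def del: upt_Suc)
next
  case False
  then have "coeff q i = 0" "coeff q (i - 1) = 0" by (auto intro: coeff_eq_0)
  with False show ?thesis unfolding skew_xmult_def by (simp add: nth_default_def s_0 d_0)
qed

lemma degree_xmult: "degree (skew_xmult \<sigma> \<delta> q) \<le> Suc (degree q)"
  by (rule degree_le) (auto simp: coeff_xmult coeff_eq_0 s_0 d_0)

lemma degree_X: "degree (X n q) \<le> n + degree q"
proof (induction n)
  case (Suc n) then show ?case using degree_xmult[of "X n q"] by simp
qed simp

lemma coeff_X_0: "n + degree q < i \<Longrightarrow> coeff (X n q) i = 0"
  using degree_X[of n q] by (intro coeff_eq_0) simp

lemma coeff_mult: "coeff (skew_mult \<sigma> \<delta> p q) i = (\<Sum>n\<le>degree p. coeff p n * coeff (X n q) i)"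
proof (cases "i < Suc (degree p + degree q)")
  case True then show ?thesis unfolding skew_mult_def by (simp add: nth_default_def del: upt_Suc)
next
  case False
  then have "\<forall>n\<in>{..degree p}. coeff (X n q) i = 0" by (auto intro: coeff_X_0)
  with False show ?thesis unfolding skew_mult_def by (simp add: nth_default_def)
qed

lemma sum_bound: "degree (p::'a poly) \<le> M \<Longrightarrow> (\<Sum>n\<le>degree p. coeff p n * h n) = (\<Sum>n\<le>M. coeff p n * h n)"
  by (rule sum.mono_neutral_left) (auto simp: coeff_eq_0)

lemma coeff_mult_bound: "degree p \<le> M \<Longrightarrow> coeff (skew_mult \<sigma> \<delta> p q) i = (\<Sum>n\<le>M. coeff p n * coeff (X n q) i)"
  by (simp add: coeff_mult sum_bound)

lemma degree_mult: "degree (skew_mult \<sigma> \<delta> p q) \<le> degree p + degree q"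
  by (rule degree_le) (auto simp: coeff_mult intro!: sum.neutral coeff_X_0)

definition ev :: "'a \<Rightarrow> 'a poly \<Rightarrow> 'a \<Rightarrow> 'a" where
  "ev b f c = (\<Sum>n\<le>degree f. coeff f n * (T b ^^ n) c)"

lemma ev_bound: "degree f \<le> M \<Longrightarrow> ev b f c = (\<Sum>n\<le>M. coeff f n * (T b ^^ n) c)"
  unfolding ev_def by (rule sum_bound)

lemma ev_xmult: "ev b (skew_xmult \<sigma> \<delta> q) c = T b (ev b q c)"
proof -
  let ?D = "degree q"
  have "ev b (skew_xmult \<sigma> \<delta> q) c = (\<Sum>n\<le>Suc ?D. coeff (skew_xmult \<sigma> \<delta> q) n * (T b ^^ n) c)"
    by (rule ev_bound[OF degree_xmult])
  also have "\<dots> = (\<Sum>n\<le>Suc ?D. (if n = 0 then 0 else \<sigma> (coeff q (n - 1))) * (T b ^^ n) c)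
       + (\<Sum>n\<le>Suc ?D. \<delta> (coeff q n) * (T b ^^ n) c)"
    by (simp add: coeff_xmult distrib_right sum.distrib)
  also have "(\<Sum>n\<le>Suc ?D. (if n = 0 then 0 else \<sigma> (coeff q (n - 1))) * (T b ^^ n) c)
      = (\<Sum>n\<le>?D. \<sigma> (coeff q n) * T b ((T b ^^ n) c))"
    by (subst sum.atMost_Suc_shift) simp
  also have "(\<Sum>n\<le>Suc ?D. \<delta> (coeff q n) * (T b ^^ n) c) = (\<Sum>n\<le>?D. \<delta> (coeff q n) * (T b ^^ n) c)"
    by (simp add: coeff_eq_0 d_0)
  also have "(\<Sum>n\<le>?D. \<sigma> (coeff q n) * T b ((T b ^^ n) c)) + (\<Sum>n\<le>?D. \<delta> (coeff q n) * (T b ^^ n) c)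
      = T b (ev b q c)"
    unfolding ev_def T_sum T_mult by (simp add: sum.distrib)
  finally show ?thesis .
qed

lemma ev_X: "ev b (X n q) c = (T b ^^ n) (ev b q c)"
  by (induction n) (auto simp: ev_xmult)

lemma ev_mult: "ev b (skew_mult \<sigma> \<delta> p q) c = ev b p (ev b q c)"
proof -
  let ?N = "degree p + degree q"
  have "ev b (skew_mult \<sigma> \<delta> p q) c = (\<Sum>i\<le>?N. coeff (skew_mult \<sigma> \<delta> p q) i * (T b ^^ i) c)"
    by (rule ev_bound[OF degree_mult])
  also have "\<dots> = (\<Sum>i\<le>?N. \<Sum>n\<le>degree p. coeff p n * (coeff (X n q) i * (T b ^^ i) c))"
    by (simp add: coeff_mult sum_distrib_right mult.assoc)
  also have "\<dots> = (\<Sum>n\<le>degree p. coeff p n * (\<Sum>i\<le>?N. coeff (X n q) i * (T b ^^ i) c))"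
    by (subst sum.swap) (simp add: sum_distrib_left)
  also have "\<dots> = (\<Sum>n\<le>degree p. coeff p n * ev b (X n q) c)"
  proof (rule sum.cong[OF refl])
    fix n assume "n \<in> {..degree p}"
    then have "degree (X n q) \<le> ?N" using degree_X[of n q] by auto
    then show "coeff p n * (\<Sum>i\<le>?N. coeff (X n q) i * (T b ^^ i) c) = coeff p n * ev b (X n q) c"
      by (simp add: ev_bound)
  qed
  also have "\<dots> = ev b p (ev b q c)" unfolding ev_X by (simp add: ev_def)
  finally show ?thesis .
qed


lemma ev_add: "ev b (f + g) c = ev b f c + ev b g c"
proof -
  let ?M = "max (degree f) (degree g)"
  have "ev b (f + g) c = (\<Sum>n\<le>?M. coeff (f+g) n * (T b ^^ n) c)"
    by (rule ev_bound) (rule degree_add_le_max)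
  also have "\<dots> = (\<Sum>n\<le>?M. coeff f n * (T b ^^ n) c) + (\<Sum>n\<le>?M. coeff g n * (T b ^^ n) c)"
    by (simp add: distrib_right sum.distrib)
  also have "\<dots> = ev b f c + ev b g c" using ev_bound[of f ?M b c] ev_bound[of g ?M b c] by simp
  finally show ?thesis .
qed

lemma ev_const: "ev b [:r:] c = r * c" by (simp add: ev_def)

lemma ev_lin: "ev b (skew_lin x) c = T b c - x * c"
  by (simp add: ev_def skew_lin_def)

lemma ev_0: "ev b f 0 = 0" by (simp add: ev_def Tpow_0)

lemma mult_add_left: "skew_mult \<sigma> \<delta> (p + p') q = skew_mult \<sigma> \<delta> p q + skew_mult \<sigma> \<delta> p' q"
proof (rule poly_eqI)
  fix i
  let ?M = "max (degree p) (degree p')"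
  have "coeff (skew_mult \<sigma> \<delta> (p + p') q) i = (\<Sum>n\<le>?M. coeff (p+p') n * coeff (X n q) i)"
    by (rule coeff_mult_bound) (rule degree_add_le_max)
  also have "\<dots> = (\<Sum>n\<le>?M. coeff p n * coeff (X n q) i) + (\<Sum>n\<le>?M. coeff p' n * coeff (X n q) i)"
    by (simp add: distrib_right sum.distrib)
  also have "\<dots> = coeff (skew_mult \<sigma> \<delta> p q + skew_mult \<sigma> \<delta> p' q) i" using coeff_mult_bound[of p ?M q i] coeff_mult_bound[of p' ?M q i] by simp
  finally show "coeff (skew_mult \<sigma> \<delta> (p + p') q) i = coeff (skew_mult \<sigma> \<delta> p q + skew_mult \<sigma> \<delta> p' q) i" .
qed

lemma mult_0_left: "skew_mult \<sigma> \<delta> 0 q = 0"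
  by (rule poly_eqI) (simp add: coeff_mult)

lemma degree_lin: "degree (skew_lin b) = 1" by (simp add: skew_lin_def)

lemma coeff_X_lin: "coeff (X n (skew_lin b)) (Suc n) = 1"
proof (induction n)
  case 0 then show ?case by (simp add: skew_lin_def)
next
  case (Suc n)
  have "coeff (X n (skew_lin b)) (Suc (Suc n)) = 0" by (rule coeff_X_0) (simp add: degree_lin)
  with Suc show ?case by (simp add: coeff_xmult s_1 d_0)
qed

lemma coeff_monom_mult: "coeff (skew_mult \<sigma> \<delta> (monom \<alpha> n) q) i = \<alpha> * coeff (X n q) i"
proof -
  have "coeff (skew_mult \<sigma> \<delta> (monom \<alpha> n) q) i = (\<Sum>k\<le>n. coeff (monom \<alpha> n) k * coeff (X k q) i)"
    by (rule coeff_mult_bound) (simp add: degree_monom_le)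
  also have "\<dots> = \<alpha> * coeff (X n q) i" by (subst sum.remove[of _ n]) auto
  finally show ?thesis .
qed

lemma division: "degree f \<le> N \<Longrightarrow> \<exists>Q r. f = skew_mult \<sigma> \<delta> Q (skew_lin b) + [:r:]"
proof (induction N arbitrary: f)
  case 0
  then have "f = [:coeff f 0:]" by (metis degree_0_id le_zero_eq)
  then show ?case by (metis add_0 mult_0_left)
next
  case (Suc N)
  define \<alpha> where "\<alpha> = coeff f (Suc N)"
  define m where "m = skew_mult \<sigma> \<delta> (monom \<alpha> N) (skew_lin b)"
  have "degree (f - m) \<le> N"
  proof (rule degree_le, intro allI impI)
    fix i assume "N < i"
    show "coeff (f - m) i = 0"
    proof (cases "i = Suc N")
      case True then show ?thesis by (simp add: m_def coeff_monom_mult coeff_X_lin \<alpha>_def)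
    next
      case False
      with \<open>N < i\<close> have "Suc N < i" by simp
      then have "coeff f i = 0" "coeff (X N (skew_lin b)) i = 0"
        using Suc.prems by (auto intro!: coeff_eq_0 coeff_X_0 simp: degree_lin)
      then show ?thesis by (simp add: m_def coeff_monom_mult)
    qed
  qed
  from Suc.IH[OF this] obtain Q r where "f - m = skew_mult \<sigma> \<delta> Q (skew_lin b) + [:r:]" by blast
  then have "f = skew_mult \<sigma> \<delta> (Q + monom \<alpha> N) (skew_lin b) + [:r:]"
    by (simp add: mult_add_left m_def algebra_simps)
  then show ?case by blast
qed

lemma root_iff: "right_dvd \<sigma> \<delta> (skew_lin b) f \<longleftrightarrow> ev b f 1 = 0"
proof
  assume "right_dvd \<sigma> \<delta> (skew_lin b) f"
  then obtain Q where "f = skew_mult \<sigma> \<delta> Q (skew_lin b)" unfolding right_dvd_def by blast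
  then show "ev b f 1 = 0" by (simp add: ev_mult ev_lin T_1 ev_0)
next
  assume h: "ev b f 1 = 0"
  obtain Q r where f: "f = skew_mult \<sigma> \<delta> Q (skew_lin b) + [:r:]" using division by blast
  then have "ev b f 1 = r" by (simp add: ev_add ev_mult ev_lin T_1 ev_0 ev_const)
  with h f have "f = skew_mult \<sigma> \<delta> Q (skew_lin b)" by simp
  then show "right_dvd \<sigma> \<delta> (skew_lin b) f" unfolding right_dvd_def by blast
qed

definition Gs :: "'a \<Rightarrow> 'a list \<Rightarrow> 'a \<Rightarrow> 'a" where
  "Gs b as = foldl (\<lambda>g x c. T b (g c) - x * g c) id as"

lemma Gs_Nil: "Gs b [] c = c" by (simp add: Gs_def)
lemma Gs_snoc: "Gs b (as @ [x]) c = T b (Gs b as c) - x * Gs b as c" by (simp add: Gs_def)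

lemma foldl_shift: "foldl (\<lambda>g x c. T b (g c) - x * g c) h xs c = foldl (\<lambda>g x c. T b (g c) - x * g c) id xs (h c)"
  by (induction xs arbitrary: h rule: rev_induct) auto

lemma Gs_Cons: "Gs b (x # xs) c = Gs b xs (T b c - x * c)"
  unfolding Gs_def foldl.simps by (subst foldl_shift) simp

lemma ev_P: "ev b (P_seq \<sigma> \<delta> as) c = Gs b as c"
proof (induction as arbitrary: c rule: rev_induct)
  case Nil then show ?case by (simp add: P_seq_def ev_const Gs_Nil)
next
  case (snoc x xs)
  have "P_seq \<sigma> \<delta> (xs @ [x]) = skew_mult \<sigma> \<delta> (skew_lin x) (P_seq \<sigma> \<delta> xs)" by (simp add: P_seq_def)
  then show ?case by (simp add: ev_mult ev_lin snoc Gs_snoc)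
qed

lemma Gs_zero: "Gs b as 0 = 0"
  by (induction as rule: rev_induct) (auto simp: Gs_Nil Gs_snoc T_0)

lemma Gs_add: "Gs b as (c + d) = Gs b as c + Gs b as d"
  by (induction as rule: rev_induct) (auto simp: Gs_Nil Gs_snoc T_add algebra_simps)

lemma Gs_conj: "T a c = b * c \<Longrightarrow> Gs a as (d * c) = Gs b as d * c"
proof (induction as rule: rev_induct)
  case Nil then show ?case by (simp add: Gs_Nil)
next
  case (snoc x xs)
  have "T a (Gs b xs d * c) = T b (Gs b xs d) * c"
    unfolding T_mult snoc.prems by (simp add: T_def algebra_simps)
  then show ?case using snoc by (simp add: Gs_snoc algebra_simps)
qed

lemma T_inv_conj: assumes "u \<noteq> 0" "T b u = x * u" shows "T x (inverse u) = b * inverse u"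
proof -
  have "b = T b (inverse u * u)" using assms by (simp add: T_1)
  also have "\<dots> = (\<sigma> (inverse u) * x + \<delta> (inverse u)) * u" unfolding T_mult assms(2) by (simp add: algebra_simps)
  finally have "b * inverse u = \<sigma> (inverse u) * x + \<delta> (inverse u)" using assms(1) by (simp add: mult.assoc)
  then show ?thesis by (simp add: T_def)
qed

lemma Gs_roots_conj:
  assumes "\<forall>x\<in>set as. \<exists>e. e \<noteq> 0 \<and> T a e = x * e" "d \<noteq> 0" "Gs b as d = 0"
  shows "\<exists>c. c \<noteq> 0 \<and> T a c = b * c"
  using assms
proof (induction as rule: rev_induct)
  case Nil then show ?case by (simp add: Gs_Nil)
next
  case (snoc x xs)
  define u where "u = Gs b xs d"
  show ?case
  proof (cases "u = 0")
    case True then show ?thesis using snoc by (simp add: u_def)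
  next
    case False
    from snoc.prems(3) have Tu: "T b u = x * u" by (simp add: Gs_snoc u_def)
    from snoc.prems(1) obtain e where e: "e \<noteq> 0" "T a e = x * e" by auto
    have "T a (inverse u * e) = T x (inverse u) * e"
      unfolding T_mult e(2) by (simp add: T_def algebra_simps)
    also have "\<dots> = b * (inverse u * e)" using T_inv_conj[OF False Tu] by (simp add: mult.assoc)
    finally show ?thesis using False e(1) by (intro exI[of _ "inverse u * e"]) simp
  qed
qed


lemma cent_iff: "\<beta> \<in> centralizer \<sigma> \<delta> a \<longleftrightarrow> T a \<beta> = a * \<beta>"
  by (simp add: centralizer_def T_def)

lemma Gs_hd: "Gs a (a # rest) 1 = 0"
  by (simp add: Gs_Cons T_1 Gs_zero)

end

locale subdiv =
  fixes K :: "'a::division_ring set"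
  assumes K0: "0 \<in> K" and K1: "1 \<in> K" and Kadd: "\<And>x y. x\<in>K \<Longrightarrow> y\<in>K \<Longrightarrow> x+y \<in> K"
    and Kneg: "\<And>x. x\<in>K \<Longrightarrow> -x \<in> K" and Kmult: "\<And>x y. x\<in>K \<Longrightarrow> y\<in>K \<Longrightarrow> x*y \<in> K"
    and Kinv: "\<And>x. x\<in>K \<Longrightarrow> inverse x \<in> K"
begin

lemma Kdiff: "x\<in>K \<Longrightarrow> y\<in>K \<Longrightarrow> x-y \<in> K" using Kadd Kneg by (metis diff_conv_add_uminus)

lemma Ksum: "(\<And>i. i\<in>A \<Longrightarrow> f i \<in> K) \<Longrightarrow> sum f A \<in> K"
  by (induction A rule: infinite_finite_induct) (auto intro: K0 Kadd)

lemma steinitz: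
  assumes "finite B" "finite J" "card B < card J"
    "\<forall>v\<in>B. \<forall>j\<in>J. \<gamma> v j \<in> K" "\<forall>j\<in>J. w j = (\<Sum>v\<in>B. v * \<gamma> v j)"
  shows "\<exists>\<beta>. (\<forall>j\<in>J. \<beta> j \<in> K) \<and> (\<exists>j\<in>J. \<beta> j \<noteq> 0) \<and> (\<Sum>j\<in>J. w j * \<beta> j) = 0"
  using assms
proof (induction B arbitrary: J w \<gamma> rule: finite_induct)
  case empty
  then obtain j0 where j0: "j0 \<in> J" by (metis all_not_in_conv card.empty less_irrefl)
  show ?case
    by (rule exI[of _ "\<lambda>j. if j = j0 then 1 else 0"]) (use empty j0 K0 K1 in auto)
next
  case (insert x B)
  define g where "g = \<gamma> x"
  show ?case
  proof (cases "\<forall>j\<in>J. g j = 0")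
    case True
    have "\<forall>j\<in>J. w j = (\<Sum>v\<in>B. v * \<gamma> v j)" using insert True by (simp add: g_def)
    moreover have "card B < card J" using insert by simp
    ultimately show ?thesis using insert.IH[of J \<gamma> w] insert.prems by auto
  next
    case False
    then obtain k where k: "k \<in> J" "g k \<noteq> 0" by auto
    define gi where "gi = inverse (g k)"
    define J' where "J' = J - {k}"
    define w' where "w' = (\<lambda>j. w j - w k * gi * g j)"
    define \<gamma>' where "\<gamma>' = (\<lambda>v j. \<gamma> v j - \<gamma> v k * gi * g j)"
    have gk: "g k * gi = 1" using k by (simp add: gi_def)
    have gK: "\<forall>j\<in>J. g j \<in> K" using insert.prems(3) by (simp add: g_def)
    have giK: "gi \<in> K" using gK k Kinv by (simp add: gi_def)
    have w'_span: "\<forall>j\<in>J'. w' j = (\<Sum>v\<in>B. v * \<gamma>' v j)"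
    proof
      fix j assume "j \<in> J'"
      hence j: "j \<in> J" by (simp add: J'_def)
      have wj: "w j = x * g j + (\<Sum>v\<in>B. v * \<gamma> v j)" using insert.prems(4) j insert.hyps by (simp add: g_def)
      have wk: "w k = x * g k + (\<Sum>v\<in>B. v * \<gamma> v k)" using insert.prems(4) k insert.hyps by (simp add: g_def)
      have "w' j = x * g j + (\<Sum>v\<in>B. v * \<gamma> v j) - (x * g k + (\<Sum>v\<in>B. v * \<gamma> v k)) * gi * g j"
        by (simp add: w'_def wj wk)
      also have "\<dots> = x * (g j - (g k * gi) * g j) + ((\<Sum>v\<in>B. v * \<gamma> v j) - (\<Sum>v\<in>B. v * \<gamma> v k) * gi * g j)"
        by (simp add: algebra_simps)
      also have "\<dots> = (\<Sum>v\<in>B. v * \<gamma> v j) - (\<Sum>v\<in>B. v * \<gamma> v k * gi * g j)"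
        by (simp add: gk sum_distrib_right)
      also have "\<dots> = (\<Sum>v\<in>B. v * \<gamma>' v j)"
        by (simp add: \<gamma>'_def sum_subtractf algebra_simps)
      finally show "w' j = (\<Sum>v\<in>B. v * \<gamma>' v j)" .
    qed
    have cardJ': "card B < card J'" using insert k by (simp add: J'_def)
    have \<gamma>'K: "\<forall>v\<in>B. \<forall>j\<in>J'. \<gamma>' v j \<in> K"
      using insert.prems(3) k gK giK by (auto simp: \<gamma>'_def J'_def intro!: Kdiff Kmult)
    obtain \<beta>' where \<beta>': "\<forall>j\<in>J'. \<beta>' j \<in> K" "\<exists>j\<in>J'. \<beta>' j \<noteq> 0" "(\<Sum>j\<in>J'. w' j * \<beta>' j) = 0"
      using insert.IH[of J' \<gamma>' w'] insert.prems(1) cardJ' \<gamma>'K w'_span by (auto simp: J'_def)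
    define S where "S = (\<Sum>j\<in>J'. g j * \<beta>' j)"
    define \<beta> where "\<beta> = (\<lambda>j. if j = k then - (gi * S) else \<beta>' j)"
    have "(\<Sum>j\<in>J. w j * \<beta> j) = w k * \<beta> k + (\<Sum>j\<in>J'. w j * \<beta> j)"
      using sum.remove[OF insert.prems(1) k(1)] by (simp add: J'_def)
    also have "(\<Sum>j\<in>J'. w j * \<beta> j) = (\<Sum>j\<in>J'. w' j * \<beta>' j + w k * gi * (g j * \<beta>' j))"
      by (rule sum.cong) (auto simp: \<beta>_def w'_def J'_def algebra_simps)
    also have "\<dots> = w k * gi * S"
      by (simp add: sum.distrib \<beta>'(3) S_def sum_distrib_left)
    finally have sum0: "(\<Sum>j\<in>J. w j * \<beta> j) = 0" by (simp add: \<beta>_def algebra_simps)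
    have SK: "S \<in> K" unfolding S_def using gK \<beta>'(1) by (intro Ksum Kmult) (auto simp: J'_def)
    have "\<forall>j\<in>J. \<beta> j \<in> K" using \<beta>'(1) SK giK by (auto simp: \<beta>_def J'_def intro!: Kneg Kmult)
    moreover have "\<exists>j\<in>J. \<beta> j \<noteq> 0" using \<beta>'(2) by (auto simp: \<beta>_def J'_def)
    ultimately show ?thesis using sum0 by blast
  qed
qed

lemma not_surj:
  assumes fd: "right_fin_dim K" and Hadd: "\<And>c d. H (c+d) = H c + H d"
    and Hhom: "\<And>c \<beta>. \<beta>\<in>K \<Longrightarrow> H (c*\<beta>) = H c * \<beta>" and H1: "H 1 = 0"
  shows "\<exists>e. \<forall>c. H c \<noteq> e"
proof (rule ccontr)
  assume "\<not> ?thesis"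
  hence surj: "\<forall>e. \<exists>c. H c = e" by blast
  obtain B where B: "finite B" "\<forall>y. \<exists>c. (\<forall>v\<in>B. c v \<in> K) \<and> y = (\<Sum>v\<in>B. v * c v)"
    using fd unfolding right_fin_dim_def by blast
  define w where "w = rec_nat (1::'a) (\<lambda>k wk. SOME y. H y = wk)"
  have w0: "w 0 = 1" by (simp add: w_def)
  have wS: "H (w (Suc k)) = w k" for k
  proof -
    have eq: "w (Suc k) = (SOME y. H y = w k)" by (simp add: w_def)
    have "\<exists>y. H y = w k" using surj by blast
    then have "H (SOME y. H y = w k) = w k" by (rule someI_ex)
    then show ?thesis by (simp only: eq)
  qed
  have H0: "H 0 = 0" using Hadd[of 0 0] by simp
  have Hp_add: "(H^^t) (c + d) = (H^^t) c + (H^^t) d" for t c d by (induction t) (auto simp: Hadd)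
  have Hp_0: "(H^^t) 0 = 0" for t by (induction t) (auto simp: H0)
  have Hp_hom: "\<beta> \<in> K \<Longrightarrow> (H^^t) (c*\<beta>) = (H^^t) c * \<beta>" for t c \<beta> by (induction t) (auto simp: Hhom)
  have Hp_sum: "(H^^t) (sum f A) = (\<Sum>i\<in>A. (H^^t) (f i))" for t and f :: "nat \<Rightarrow> 'a" and A
    using sum_comp_morphism[of "H^^t" f A, OF Hp_0 Hp_add] by (simp add: o_def)
  have Hw: "(H^^k) (w k) = 1" for k
  proof (induction k)
    case 0 then show ?case by (simp add: w0)
  next
    case (Suc k) then show ?case by (simp add: funpow_Suc_right wS del: funpow.simps)
  qed
  have Hw0: "(H^^t) (w j) = 0" if "j < t" for j t
  proof -
    from that have "t = (t - Suc j) + Suc j" by simp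
    then have "(H^^t) (w j) = (H^^(t - Suc j)) ((H^^Suc j) (w j))" by (metis funpow_add comp_apply)
    also have "(H^^Suc j) (w j) = 0" using Hw[of j] H1 by simp
    finally show ?thesis using Hp_0 by simp
  qed
  define J where "J = {..card B}"
  have "\<forall>j. \<exists>c. (\<forall>v\<in>B. c v \<in> K) \<and> w j = (\<Sum>v\<in>B. v * c v)" using B(2) by blast
  from choice[OF this] obtain \<gamma> where \<gamma>: "\<forall>j. (\<forall>v\<in>B. \<gamma> j v \<in> K) \<and> w j = (\<Sum>v\<in>B. v * \<gamma> j v)" by blast
  have "\<exists>\<beta>. (\<forall>j\<in>J. \<beta> j \<in> K) \<and> (\<exists>j\<in>J. \<beta> j \<noteq> 0) \<and> (\<Sum>j\<in>J. w j * \<beta> j) = 0"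
    by (rule steinitz[OF B(1), of J "\<lambda>v j. \<gamma> j v" w]) (use \<gamma> in \<open>auto simp: J_def\<close>)
  then obtain \<beta> where \<beta>: "\<forall>j\<in>J. \<beta> j \<in> K" "\<exists>j\<in>J. \<beta> j \<noteq> 0" "(\<Sum>j\<in>J. w j * \<beta> j) = 0" by blast
  define t where "t = Max {j\<in>J. \<beta> j \<noteq> 0}"
  have fin: "finite {j\<in>J. \<beta> j \<noteq> 0}" by (simp add: J_def)
  have "t \<in> {j\<in>J. \<beta> j \<noteq> 0}" unfolding t_def using fin \<beta>(2) by (intro Max_in) auto
  then have t: "t \<in> J" "\<beta> t \<noteq> 0" by auto
  have tmax: "j \<le> t" if "j \<in> J" "\<beta> j \<noteq> 0" for j unfolding t_def using fin that by (intro Max_ge) auto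
  have "0 = (H^^t) (\<Sum>j\<in>J. w j * \<beta> j)" using \<beta>(3) Hp_0 by simp
  also have "\<dots> = (\<Sum>j\<in>J. (H^^t) (w j) * \<beta> j)" using Hp_sum Hp_hom \<beta>(1) by simp
  also have "\<dots> = (H^^t) (w t) * \<beta> t + (\<Sum>j\<in>J - {t}. (H^^t) (w j) * \<beta> j)"
    using sum.remove[of J t] t by (simp add: J_def)
  also have "(\<Sum>j\<in>J - {t}. (H^^t) (w j) * \<beta> j) = 0"
  proof (rule sum.neutral, intro ballI)
    fix j assume j: "j \<in> J - {t}"
    show "(H^^t) (w j) * \<beta> j = 0"
    proof (cases "\<beta> j = 0")
      case False
      with j tmax have "j < t" by force
      then show ?thesis by (simp add: Hw0)
    qed simp
  qed
  finally show False using Hw[of t] t by simp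
qed

end

context skew
begin

lemma subdiv_cent: "subdiv (centralizer \<sigma> \<delta> a)"
proof
  show "0 \<in> centralizer \<sigma> \<delta> a" by (simp add: cent_iff T_0)
  show "1 \<in> centralizer \<sigma> \<delta> a" by (simp add: cent_iff T_1)
  fix x y
  show "x \<in> centralizer \<sigma> \<delta> a \<Longrightarrow> y \<in> centralizer \<sigma> \<delta> a \<Longrightarrow> x + y \<in> centralizer \<sigma> \<delta> a"
    by (simp add: cent_iff T_add algebra_simps)
  show "x \<in> centralizer \<sigma> \<delta> a \<Longrightarrow> - x \<in> centralizer \<sigma> \<delta> a"
    by (simp add: cent_iff T_neg)
  show "x * y \<in> centralizer \<sigma> \<delta> a" if hx: "x \<in> centralizer \<sigma> \<delta> a" and hy: "y \<in> centralizer \<sigma> \<delta> a"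
  proof -
    have "T a (x * y) = (\<sigma> x * a + \<delta> x) * y" using hy by (simp add: T_mult cent_iff algebra_simps)
    also have "\<dots> = a * (x * y)" using hx by (simp add: T_def cent_iff mult.assoc)
    finally show ?thesis by (simp add: cent_iff)
  qed
  show "x \<in> centralizer \<sigma> \<delta> a \<Longrightarrow> inverse x \<in> centralizer \<sigma> \<delta> a"
  proof (cases "x = 0")
    case True then show ?thesis by (simp add: cent_iff T_0)
  next
    case False
    assume "x \<in> centralizer \<sigma> \<delta> a"
    then show ?thesis using T_inv_conj[OF False, of a a] by (simp add: cent_iff)
  qed
qed

lemma construct:
  assumes fd: "right_fin_dim (centralizer \<sigma> \<delta> a)"
  shows "\<exists>as. length as = Suc r \<and> hd as = a \<and> (\<forall>x\<in>set as. \<exists>e. e \<noteq> 0 \<and> T a e = x * e)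
           \<and> (\<forall>c. Gs a as c = 0 \<longrightarrow> c \<in> centralizer \<sigma> \<delta> a)"
proof (induction r)
  case 0
  show ?case
    by (rule exI[of _ "[a]"]) (auto simp: Gs_Cons Gs_Nil cent_iff T_1 intro: exI[of _ 1])
next
  case (Suc r)
  then obtain as where as: "length as = Suc r" "hd as = a" "\<forall>x\<in>set as. \<exists>e. e \<noteq> 0 \<and> T a e = x * e"
    "\<forall>c. Gs a as c = 0 \<longrightarrow> c \<in> centralizer \<sigma> \<delta> a" by blast
  then obtain rest where asr: "as = a # rest" by (cases as) auto
  interpret K: subdiv "centralizer \<sigma> \<delta> a" by (rule subdiv_cent)
  have "\<exists>e. \<forall>c. Gs a as c \<noteq> e"
  proof (rule K.not_surj[OF fd])
    show "Gs a as (c + d) = Gs a as c + Gs a as d" for c d by (rule Gs_add)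
    show "Gs a as (c * \<beta>) = Gs a as c * \<beta>" if "\<beta> \<in> centralizer \<sigma> \<delta> a" for c \<beta>
      using that by (intro Gs_conj) (simp add: cent_iff)
    show "Gs a as 1 = 0" by (simp add: asr Gs_hd)
  qed
  then obtain e where e: "\<forall>c. Gs a as c \<noteq> e" by blast
  then have enz: "e \<noteq> 0" using Gs_zero by metis
  define x where "x = T a e * inverse e"
  have Te: "T a e = x * e" using enz by (simp add: x_def mult.assoc)
  show ?case
  proof (intro exI[of _ "as @ [x]"] conjI)
    show "length (as @ [x]) = Suc (Suc r)" using as by simp
    show "hd (as @ [x]) = a" using asr by simp
    show "\<forall>y\<in>set (as @ [x]). \<exists>e. e \<noteq> 0 \<and> T a e = y * e" using as(3) Te enz by auto
    show "\<forall>c. Gs a (as @ [x]) c = 0 \<longrightarrow> c \<in> centralizer \<sigma> \<delta> a"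
    proof (intro allI impI)
      fix c assume h: "Gs a (as @ [x]) c = 0"
      define u where "u = Gs a as c"
      have Tu: "T a u = x * u" using h by (simp add: Gs_snoc u_def)
      show "c \<in> centralizer \<sigma> \<delta> a"
      proof (cases "u = 0")
        case True then show ?thesis using as(4) by (simp add: u_def)
      next
        case False
        define \<beta> where "\<beta> = inverse e * u"
        have u_eq: "u = e * \<beta>" using enz by (simp add: \<beta>_def mult.assoc[symmetric])
        have bnz: "\<beta> \<noteq> 0" using False enz by (simp add: \<beta>_def)
        have "\<sigma> e * T a \<beta> + \<delta> e * \<beta> = T a (e * \<beta>)" by (simp add: T_mult)
        also have "\<dots> = x * e * \<beta>" using Tu u_eq by (simp add: mult.assoc)
        also have "\<dots> = \<sigma> e * (a * \<beta>) + \<delta> e * \<beta>" unfolding Te[symmetric] by (simp add: T_def algebra_simps)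
        finally have "\<sigma> e * T a \<beta> = \<sigma> e * (a * \<beta>)" by simp
        then have bK: "\<beta> \<in> centralizer \<sigma> \<delta> a" using s_nz[OF enz] by (simp add: cent_iff)
        then have ibK: "inverse \<beta> \<in> centralizer \<sigma> \<delta> a" by (rule K.Kinv)
        have "Gs a as (c * inverse \<beta>) = u * inverse \<beta>"
          using ibK by (simp add: u_def cent_iff Gs_conj)
        also have "\<dots> = e" using bnz by (simp add: u_eq mult.assoc)
        finally show ?thesis using e by blast
      qed
    qed
  qed
qed

end

theorem mainTheorem14:
  fixes \<sigma> \<delta> :: "'a::division_ring \<Rightarrow> 'a" and a :: 'a
  assumes "ring_endo \<sigma>"
    and "sigma_derivation \<sigma> \<delta>"
    and "right_fin_dim (centralizer \<sigma> \<delta> a)"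
  shows "\<forall>r::nat. r > 0 \<longrightarrow>
           (\<exists>as. length as = r \<and> hd as = a \<and> multiplicity_seq \<sigma> \<delta> as)"
proof (intro allI impI)
  fix r :: nat assume "r > 0"
  then obtain r' where r: "r = Suc r'" by (cases r) auto
  interpret skew \<sigma> \<delta> using assms(1,2) by unfold_locales
  obtain as where as: "length as = Suc r'" "hd as = a" "\<forall>x\<in>set as. \<exists>e. e \<noteq> 0 \<and> T a e = x * e"
    "\<forall>c. Gs a as c = 0 \<longrightarrow> c \<in> centralizer \<sigma> \<delta> a" using construct[OF assms(3)] by blast
  then obtain rest where asr: "as = a # rest" by (cases as) auto
  have "\<forall>b. right_dvd \<sigma> \<delta> (skew_lin b) (P_seq \<sigma> \<delta> as) \<longleftrightarrow> b = hd as"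
  proof
    fix b
    show "right_dvd \<sigma> \<delta> (skew_lin b) (P_seq \<sigma> \<delta> as) \<longleftrightarrow> b = hd as"
    proof
      assume "right_dvd \<sigma> \<delta> (skew_lin b) (P_seq \<sigma> \<delta> as)"
      then have g: "Gs b as 1 = 0" by (simp add: root_iff ev_P)
      obtain c where c: "c \<noteq> 0" "T a c = b * c" using Gs_roots_conj[OF as(3) _ g] by auto
      have "Gs a as (1 * c) = Gs b as 1 * c" by (rule Gs_conj[OF c(2)])
      then have "Gs a as c = 0" using g by simp
      then have "T a c = a * c" using as(4) by (simp add: cent_iff)
      with c show "b = hd as" using as(2) by simp
    next
      assume "b = hd as"
      then show "right_dvd \<sigma> \<delta> (skew_lin b) (P_seq \<sigma> \<delta> as)"
        by (simp add: root_iff ev_P asr Gs_hd)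
    qed
  qed
  then show "\<exists>as. length as = r \<and> hd as = a \<and> multiplicity_seq \<sigma> \<delta> as"
    using as r by (auto simp: multiplicity_seq_def)
qed

end
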